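(* Consider the stochastic rolling-window dispatch problem $P_t$ described in the context with an optimal primal-dual solution, and define $\pi^{LMP}_t:=\lambda_t^*$ and, for ESR $i$, $\pi_{it}^{TLMP\text{-}C}:=\lambda^*_t-\xi_i^{C}\phi^*_{it}-\Delta_{it}^{C*}$, $\pi_{it}^{TLMP\text{-}D}:=\lambda^*_t-\phi^*_{it}/\xi_i^{D}+\Delta_{it}^{D*}$, where $\Delta_{it}^{C*}:=-(\bar{\mu}_{it}^{C*}-\underline{\mu}_{it}^{C*})+\sum_{k=1}^K(\bar{\mu}_{i(t+1)k}^{C*}-\underline{\mu}_{i(t+1)k}^{C*})$ and $\Delta_{it}^{D*}$ is defined identically with $D$ in place of $C$. Suppose that in window $\mathscr{H}_t$, at the optimal solution: (1) no ramping constraint of storage $i$ from $t-1$ to $t$, nor from $t$ to $t+1$ (in any scenario), is binding; and (2) no SOC limit constraint of storage $i$ is binding in any interval from $t$ to $t+W-1$ (in any scenario). Then $\pi_{it}^{TLMP\text{-}C}=\pi_{it}^{TLMP\text{-}D}=\pi^{LMP}_t$.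
   Context: Single-bus market with $N$ energy storage resources (ESRs) indexed by $i$. ESR $i$ has charging/discharging efficiencies $\xi_i^{C},\xi_i^{D}\in(0,1]$, SOC limits $\underline{E}_i\le\bar{E}_i$, charging/discharging power limits $(\underline{g}_i^{C},\bar{g}_i^{C})$, $(\underline{g}_i^{D},\bar{g}_i^{D})$, ramp limits $\underline{r}_i^{C},\bar{r}_i^{C},\underline{r}_i^{D},\bar{r}_i^{D}$, and bid-in charging benefit and discharging cost functions $f^{C}_{it},f^{D}_{it}$. At interval $t$ the operator solves, over the window $\mathscr{H}_t=\{t,\dots,t+W-1\}$, given realized inelastic demand $d_t$, $K$ demand forecast scenarios $\hat d_{t'k}$ ($t'\in\mathscr{H}_t\setminus\{t\}$) with probabilities $\epsilon_k$, and previously realized values $g^{C*}_{i(t-1)},g^{D*}_{i(t-1)},E^*_{i(t-1)}$, the problem $P_t$: minimize $\sum_i\big(f^{D}_{it}(g^{D}_{it})-f^{C}_{it}(g^{C}_{it})\big)+\sum_k\epsilon_k\sum_{t'\in\mathscr{H}_t\setminus\{t\}}\sum_i\big(f^{D}_{it'}(g^{D}_{it'k})-f^{C}_{it'}(g^{C}_{it'k})\big)$ subject to, for all $i$, $k$, $t'\in\mathscr{H}_t\setminus\{t\}$ (with the convention that in scenario $k$ the interval-$t$ variables are the binding variables $g_{it},E_{it}$): power balance $\sum_i(g^{D}_{it}-g^{C}_{it})=d_t$ (multiplier $\lambda_t$) and $\sum_i(g^{D}_{it'k}-g^{C}_{it'k})=\hat d_{t'k}$; SOC transition $E_{it}-E^*_{i(t-1)}=\xi_i^{C}g^{C}_{it}-g^{D}_{it}/\xi_i^{D}$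 (multiplier $\phi_{it}$) and $E_{it'k}-E_{i(t'-1)k}=\xi_i^{C}g^{C}_{it'k}-g^{D}_{it'k}/\xi_i^{D}$ (multiplier $\phi_{it'k}$); SOC limits $\underline{E}_i\le E_{it}\le\bar E_i$ (multipliers $\underline{\delta}_{it},\bar\delta_{it}$), $\underline{E}_i\le E_{it'k}\le\bar E_i$ (multipliers $\underline{\delta}_{it'k},\bar\delta_{it'k}$); ramping $-\underline{r}_i^{C}\le g^{C}_{it}-g^{C*}_{i(t-1)}\le\bar r_i^{C}$ (multipliers $\underline{\mu}^{C}_{it},\bar\mu^{C}_{it}$), $-\underline{r}_i^{C}\le g^{C}_{it'k}-g^{C}_{i(t'-1)k}\le\bar r_i^{C}$ (multipliers $\underline{\mu}^{C}_{it'k},\bar\mu^{C}_{it'k}$), and the same with $D$ in place of $C$; power limits $\underline g_i^{C}\le g^{C}\le\bar g_i^{C}$, $\underline g_i^{D}\le g^{D}\le\bar g_i^{D}$ for all binding and scenario variables (multipliers $\underline\rho,\bar\rho$). Multipliers of inequality constraints are nonnegative and enter the Lagrangian as $\bar\mu(x-\text{upper})+\underline\mu(\text{lower}-x)$; SOC transition equalities enter as $\phi\times$(LHS$-$RHS); power balance enters as $\lambda_t\big(d_t-\sum_i(g^D_{it}-g^C_{it})\big)$. $\pi^{LMP}_t$ is the locational marginal price and $\pi^{TLMP}_{it}$ the temporal locational marginal price of ESR $i$ (charging/discharging versions). *)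

theory Defs
  imports Main Complex_Main
begin

text \<open>ESRs are indexed by i < N, scenarios by k < K, time is absolute (nat).
  The current interval is t; the look-ahead scenario intervals are
  t' in {t+1 ..< t+W}.\<close>

record esr_data =
  xiC  :: "nat \<Rightarrow> real"
  xiD  :: "nat \<Rightarrow> real"
  Emin :: "nat \<Rightarrow> real"
  Emax :: "nat \<Rightarrow> real"
  gCmin :: "nat \<Rightarrow> real"
  gCmax :: "nat \<Rightarrow> real"
  gDmin :: "nat \<Rightarrow> real"
  gDmax :: "nat \<Rightarrow> real"
  rCdn :: "nat \<Rightarrow> real"
  rCup :: "nat \<Rightarrow> real"
  rDdn :: "nat \<Rightarrow> real"
  rDup :: "nat \<Rightarrow> real"
  fC :: "nat \<Rightarrow> nat \<Rightarrow> real \<Rightarrow> real"  \<comment> \<open>charging benefit f^C_{i t'}\<close>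
  fD :: "nat \<Rightarrow> nat \<Rightarrow> real \<Rightarrow> real"  \<comment> \<open>discharging cost f^D_{i t'}\<close>

record mkt_data =
  NN :: nat
  KK :: nat
  WW :: nat
  tt :: nat
  dem :: real          \<comment> \<open>realized demand d_t\<close>
  dhat :: "nat \<Rightarrow> nat \<Rightarrow> real"  \<comment> \<open>forecast dhat_{t' k}\<close>
  eps :: "nat \<Rightarrow> real"          \<comment> \<open>scenario probabilities\<close>
  gC0 :: "nat \<Rightarrow> real"
  gD0 :: "nat \<Rightarrow> real"
  E0  :: "nat \<Rightarrow> real"

text \<open>Primal variables: binding (interval t) ones indexed by i; scenario ones by i t' k.\<close>
record primal =
  gC :: "nat \<Rightarrow> real"
  gD :: "nat \<Rightarrow> real"
  E  :: "nat \<Rightarrow> real"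
  gCs :: "nat \<Rightarrow> nat \<Rightarrow> nat \<Rightarrow> real"
  gDs :: "nat \<Rightarrow> nat \<Rightarrow> nat \<Rightarrow> real"
  Es  :: "nat \<Rightarrow> nat \<Rightarrow> nat \<Rightarrow> real"

record dual =
  lam  :: real
  lams :: "nat \<Rightarrow> nat \<Rightarrow> real"
  phi  :: "nat \<Rightarrow> real"
  phis :: "nat \<Rightarrow> nat \<Rightarrow> nat \<Rightarrow> real"
  dlo  :: "nat \<Rightarrow> real"
  dhi  :: "nat \<Rightarrow> real"
  dlos :: "nat \<Rightarrow> nat \<Rightarrow> nat \<Rightarrow> real"
  dhis :: "nat \<Rightarrow> nat \<Rightarrow> nat \<Rightarrow> real"
  muClo :: "nat \<Rightarrow> real"
  muChi :: "nat \<Rightarrow> real"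
  muDlo :: "nat \<Rightarrow> real"
  muDhi :: "nat \<Rightarrow> real"
  muClos :: "nat \<Rightarrow> nat \<Rightarrow> nat \<Rightarrow> real"
  muChis :: "nat \<Rightarrow> nat \<Rightarrow> nat \<Rightarrow> real"
  muDlos :: "nat \<Rightarrow> nat \<Rightarrow> nat \<Rightarrow> real"
  muDhis :: "nat \<Rightarrow> nat \<Rightarrow> nat \<Rightarrow> real"
  rhoClo :: "nat \<Rightarrow> real"
  rhoChi :: "nat \<Rightarrow> real"
  rhoDlo :: "nat \<Rightarrow> real"
  rhoDhi :: "nat \<Rightarrow> real"
  rhoClos :: "nat \<Rightarrow> nat \<Rightarrow> nat \<Rightarrow> real"
  rhoChis :: "nat \<Rightarrow> nat \<Rightarrow> nat \<Rightarrow> real"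
  rhoDlos :: "nat \<Rightarrow> nat \<Rightarrow> nat \<Rightarrow> real"
  rhoDhis :: "nat \<Rightarrow> nat \<Rightarrow> nat \<Rightarrow> real"

definition scen_ints :: "mkt_data \<Rightarrow> nat set" where
  "scen_ints m = {tt m + 1 ..< tt m + WW m}"

definition prevC :: "mkt_data \<Rightarrow> primal \<Rightarrow> nat \<Rightarrow> nat \<Rightarrow> nat \<Rightarrow> real" where
  "prevC m x i t' k = (if t' = tt m + 1 then gC x i else gCs x i (t' - 1) k)"
definition prevD :: "mkt_data \<Rightarrow> primal \<Rightarrow> nat \<Rightarrow> nat \<Rightarrow> nat \<Rightarrow> real" where
  "prevD m x i t' k = (if t' = tt m + 1 then gD x i else gDs x i (t' - 1) k)"
definition prevE :: "mkt_data \<Rightarrow> primal \<Rightarrow> nat \<Rightarrow> nat \<Rightarrow> nat \<Rightarrow> real" where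
  "prevE m x i t' k = (if t' = tt m + 1 then E x i else Es x i (t' - 1) k)"

definition objective :: "esr_data \<Rightarrow> mkt_data \<Rightarrow> primal \<Rightarrow> real" where
  "objective p m x =
     (\<Sum>i<NN m. fD p i (tt m) (gD x i) - fC p i (tt m) (gC x i))
   + (\<Sum>k<KK m. eps m k * (\<Sum>t'\<in>scen_ints m. \<Sum>i<NN m.
          fD p i t' (gDs x i t' k) - fC p i t' (gCs x i t' k)))"

definition feasible :: "esr_data \<Rightarrow> mkt_data \<Rightarrow> primal \<Rightarrow> bool" where
  "feasible p m x \<longleftrightarrow>
     (\<Sum>i<NN m. gD x i - gC x i) = dem m
   \<and> (\<forall>k<KK m. \<forall>t'\<in>scen_ints m. (\<Sum>i<NN m. gDs x i t' k - gCs x i t' k) = dhat m t' k)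
   \<and> (\<forall>i<NN m.
        E x i - E0 m i = xiC p i * gC x i - gD x i / xiD p i
      \<and> Emin p i \<le> E x i \<and> E x i \<le> Emax p i
      \<and> - rCdn p i \<le> gC x i - gC0 m i \<and> gC x i - gC0 m i \<le> rCup p i
      \<and> - rDdn p i \<le> gD x i - gD0 m i \<and> gD x i - gD0 m i \<le> rDup p i
      \<and> gCmin p i \<le> gC x i \<and> gC x i \<le> gCmax p i
      \<and> gDmin p i \<le> gD x i \<and> gD x i \<le> gDmax p i
      \<and> (\<forall>k<KK m. \<forall>t'\<in>scen_ints m.
           Es x i t' k - prevE m x i t' k = xiC p i * gCs x i t' k - gDs x i t' k / xiD p i
         \<and> Emin p i \<le> Es x i t' k \<and> Es x i t' k \<le> Emax p i
         \<and> - rCdn p i \<le> gCs x i t' k - prevC m x i t' k \<and> gCs x i t' k - prevC m x i t' k \<le> rCup p i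
         \<and> - rDdn p i \<le> gDs x i t' k - prevD m x i t' k \<and> gDs x i t' k - prevD m x i t' k \<le> rDup p i
         \<and> gCmin p i \<le> gCs x i t' k \<and> gCs x i t' k \<le> gCmax p i
         \<and> gDmin p i \<le> gDs x i t' k \<and> gDs x i t' k \<le> gDmax p i))"

definition dual_feasible :: "mkt_data \<Rightarrow> dual \<Rightarrow> bool" where
  "dual_feasible m y \<longleftrightarrow>
     (\<forall>i<NN m. 0 \<le> dlo y i \<and> 0 \<le> dhi y i \<and> 0 \<le> muClo y i \<and> 0 \<le> muChi y i
        \<and> 0 \<le> muDlo y i \<and> 0 \<le> muDhi y i \<and> 0 \<le> rhoClo y i \<and> 0 \<le> rhoChi y i
        \<and> 0 \<le> rhoDlo y i \<and> 0 \<le> rhoDhi y i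
        \<and> (\<forall>k<KK m. \<forall>t'\<in>scen_ints m.
             0 \<le> dlos y i t' k \<and> 0 \<le> dhis y i t' k \<and> 0 \<le> muClos y i t' k \<and> 0 \<le> muChis y i t' k
           \<and> 0 \<le> muDlos y i t' k \<and> 0 \<le> muDhis y i t' k \<and> 0 \<le> rhoClos y i t' k \<and> 0 \<le> rhoChis y i t' k
           \<and> 0 \<le> rhoDlos y i t' k \<and> 0 \<le> rhoDhis y i t' k))"

text \<open>Lagrangian, with the sign conventions of the paper: inequality
  constraints as mu*(x - upper) + mu'*(lower - x), SOC transitions as
  phi*(LHS - RHS), power balances as lambda*(d - sum(gD - gC)).\<close>
definition lagrangian :: "esr_data \<Rightarrow> mkt_data \<Rightarrow> primal \<Rightarrow> dual \<Rightarrow> real" where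
  "lagrangian p m x y =
     objective p m x
   + lam y * (dem m - (\<Sum>i<NN m. gD x i - gC x i))
   + (\<Sum>k<KK m. \<Sum>t'\<in>scen_ints m. lams y t' k * (dhat m t' k - (\<Sum>i<NN m. gDs x i t' k - gCs x i t' k)))
   + (\<Sum>i<NN m.
        phi y i * ((E x i - E0 m i) - (xiC p i * gC x i - gD x i / xiD p i))
      + dhi y i * (E x i - Emax p i) + dlo y i * (Emin p i - E x i)
      + muChi y i * ((gC x i - gC0 m i) - rCup p i) + muClo y i * (- rCdn p i - (gC x i - gC0 m i))
      + muDhi y i * ((gD x i - gD0 m i) - rDup p i) + muDlo y i * (- rDdn p i - (gD x i - gD0 m i))
      + rhoChi y i * (gC x i - gCmax p i) + rhoClo y i * (gCmin p i - gC x i)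
      + rhoDhi y i * (gD x i - gDmax p i) + rhoDlo y i * (gDmin p i - gD x i)
      + (\<Sum>k<KK m. \<Sum>t'\<in>scen_ints m.
          phis y i t' k * ((Es x i t' k - prevE m x i t' k) - (xiC p i * gCs x i t' k - gDs x i t' k / xiD p i))
        + dhis y i t' k * (Es x i t' k - Emax p i) + dlos y i t' k * (Emin p i - Es x i t' k)
        + muChis y i t' k * ((gCs x i t' k - prevC m x i t' k) - rCup p i)
        + muClos y i t' k * (- rCdn p i - (gCs x i t' k - prevC m x i t' k))
        + muDhis y i t' k * ((gDs x i t' k - prevD m x i t' k) - rDup p i)
        + muDlos y i t' k * (- rDdn p i - (gDs x i t' k - prevD m x i t' k))
        + rhoChis y i t' k * (gCs x i t' k - gCmax p i) + rhoClos y i t' k * (gCmin p i - gCs x i t' k)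
        + rhoDhis y i t' k * (gDs x i t' k - gDmax p i) + rhoDlos y i t' k * (gDmin p i - gDs x i t' k)))"

text \<open>Optimal primal-dual solution of P_t: x is an optimal solution, y is
  dual feasible, there is no duality gap (complementary slackness), and x
  minimizes the Lagrangian at y (Lagrangian saddle-point optimality).\<close>
definition opt_primal_dual :: "esr_data \<Rightarrow> mkt_data \<Rightarrow> primal \<Rightarrow> dual \<Rightarrow> bool" where
  "opt_primal_dual p m x y \<longleftrightarrow>
     feasible p m x
   \<and> (\<forall>x'. feasible p m x' \<longrightarrow> objective p m x \<le> objective p m x')
   \<and> dual_feasible m y
   \<and> lagrangian p m x y = objective p m x
   \<and> (\<forall>x'. lagrangian p m x y \<le> lagrangian p m x' y)"

definition LMP :: "dual \<Rightarrow> real" where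
  "LMP y = lam y"

definition DeltaC :: "mkt_data \<Rightarrow> dual \<Rightarrow> nat \<Rightarrow> real" where
  "DeltaC m y i = - (muChi y i - muClo y i)
     + (\<Sum>k<KK m. muChis y i (tt m + 1) k - muClos y i (tt m + 1) k)"

definition DeltaD :: "mkt_data \<Rightarrow> dual \<Rightarrow> nat \<Rightarrow> real" where
  "DeltaD m y i = - (muDhi y i - muDlo y i)
     + (\<Sum>k<KK m. muDhis y i (tt m + 1) k - muDlos y i (tt m + 1) k)"

definition TLMP_C :: "esr_data \<Rightarrow> mkt_data \<Rightarrow> dual \<Rightarrow> nat \<Rightarrow> real" where
  "TLMP_C p m y i = lam y - xiC p i * phi y i - DeltaC m y i"

definition TLMP_D :: "esr_data \<Rightarrow> mkt_data \<Rightarrow> dual \<Rightarrow> nat \<Rightarrow> real" where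
  "TLMP_D p m y i = lam y - phi y i / xiD p i + DeltaD m y i"

definition wf_data :: "esr_data \<Rightarrow> mkt_data \<Rightarrow> bool" where
  "wf_data p m \<longleftrightarrow>
     (\<forall>i<NN m. 0 < xiC p i \<and> xiC p i \<le> 1 \<and> 0 < xiD p i \<and> xiD p i \<le> 1
        \<and> Emin p i \<le> Emax p i \<and> gCmin p i \<le> gCmax p i \<and> gDmin p i \<le> gDmax p i)
   \<and> (\<forall>k<KK m. 0 \<le> eps m k) \<and> (\<Sum>k<KK m. eps m k) = 1"

end

theory Submission
  imports Defs
begin

definition Uf where "Uf p m y = (\<lambda>(x::primal) j t' k.
          phis y j t' k * ((Es x j t' k - prevE m x j t' k) - (xiC p j * gCs x j t' k - gDs x j t' k / xiD p j))
        + dhis y j t' k * (Es x j t' k - Emax p j) + dlos y j t' k * (Emin p j - Es x j t' k)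
        + muChis y j t' k * ((gCs x j t' k - prevC m x j t' k) - rCup p j)
        + muClos y j t' k * (- rCdn p j - (gCs x j t' k - prevC m x j t' k))
        + muDhis y j t' k * ((gDs x j t' k - prevD m x j t' k) - rDup p j)
        + muDlos y j t' k * (- rDdn p j - (gDs x j t' k - prevD m x j t' k))
        + rhoChis y j t' k * (gCs x j t' k - gCmax p j) + rhoClos y j t' k * (gCmin p j - gCs x j t' k)
        + rhoDhis y j t' k * (gDs x j t' k - gDmax p j) + rhoDlos y j t' k * (gDmin p j - gDs x j t' k))"
definition Bf where "Bf p m y = (\<lambda>(x::primal) j.
        phi y j * ((E x j - E0 m j) - (xiC p j * gC x j - gD x j / xiD p j))
      + dhi y j * (E x j - Emax p j) + dlo y j * (Emin p j - E x j)
      + muChi y j * ((gC x j - gC0 m j) - rCup p j) + muClo y j * (- rCdn p j - (gC x j - gC0 m j))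
      + muDhi y j * ((gD x j - gD0 m j) - rDup p j) + muDlo y j * (- rDdn p j - (gD x j - gD0 m j))
      + rhoChi y j * (gC x j - gCmax p j) + rhoClo y j * (gCmin p j - gC x j)
      + rhoDhi y j * (gD x j - gDmax p j) + rhoDlo y j * (gDmin p j - gD x j))"

lemma L_split: "lagrangian p m z y = objective p m z
   + lam y * (dem m - (\<Sum>i<NN m. gD z i - gC z i))
   + (\<Sum>k<KK m. \<Sum>t'\<in>scen_ints m. lams y t' k * (dhat m t' k - (\<Sum>i<NN m. gDs z i t' k - gCs z i t' k)))
   + (\<Sum>j<NN m. Bf p m y z j + (\<Sum>k<KK m. \<Sum>t'\<in>scen_ints m. Uf p m y z j t' k))"
  unfolding lagrangian_def Bf_def Uf_def by simp

lemma fin_scen[simp]: "finite (scen_ints m)" by (simp add: scen_ints_def)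

lemma Es_pert:
  assumes iN: "i < NN m" and t0: "t0 \<in> scen_ints m" and k0: "k0 < KK m"
  shows "lagrangian p m (x\<lparr>Es := (\<lambda>j t k. Es x j t k + (if j = i \<and> t = t0 \<and> k = k0 then s else 0))\<rparr>) y
       = lagrangian p m x y + s * (phis y i t0 k0 + dhis y i t0 k0 - dlos y i t0 k0
            - (if t0 + 1 \<in> scen_ints m then phis y i (t0 + 1) k0 else 0))"
proof -
  let ?x' = "x\<lparr>Es := (\<lambda>j t k. Es x j t k + (if j = i \<and> t = t0 \<and> k = k0 then s else 0))\<rparr>"
  let ?U = "Uf p m y" and ?B = "Bf p m y"
  have tt0: "tt m + 1 \<le> t0" using t0 by (simp add: scen_ints_def)
  have pe: "prevE m ?x' j t' k = prevE m x j t' k + (if j = i \<and> t' = t0 + 1 \<and> k = k0 then s else 0)" for j t' k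
    using tt0 by (auto simp: prevE_def)
  have pc: "prevC m ?x' = prevC m x" "prevD m ?x' = prevD m x"
    by (auto simp: prevC_def prevD_def fun_eq_iff)
  have ob: "objective p m ?x' = objective p m x" by (simp add: objective_def)
  have Ud: "?U ?x' j t' k = ?U x j t' k + (if j = i \<and> k = k0 then
     (if t' = t0 then s * (phis y i t0 k0 + dhis y i t0 k0 - dlos y i t0 k0) else 0)
     + (if t' = t0 + 1 then - phis y i (t0 + 1) k0 * s else 0) else 0)" for j t' k
    unfolding Uf_def pe pc by (auto simp: algebra_simps)
  have Bd: "?B ?x' j = ?B x j" for j
    unfolding Bf_def by simp
  define c where "c = s * (phis y i t0 k0 + dhis y i t0 k0 - dlos y i t0 k0
            - (if t0 + 1 \<in> scen_ints m then phis y i (t0 + 1) k0 else 0))"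
  have inner1: "(\<Sum>t'\<in>scen_ints m. ?U ?x' j t' k) = (\<Sum>t'\<in>scen_ints m. ?U x j t' k)
       + (if j = i \<and> k = k0 then c else 0)" for j k
  proof -
    have "(\<Sum>t'\<in>scen_ints m. ?U ?x' j t' k) = (\<Sum>t'\<in>scen_ints m. ?U x j t' k)
       + ((\<Sum>t'\<in>scen_ints m. (if t' = t0 then (if j = i \<and> k = k0 then s * (phis y i t0 k0 + dhis y i t0 k0 - dlos y i t0 k0) else 0) else 0))
       + (\<Sum>t'\<in>scen_ints m. (if t' = t0 + 1 then (if j = i \<and> k = k0 then - phis y i (t0 + 1) k0 * s else 0) else 0)))"
      unfolding Ud sum.distrib[symmetric] by (rule sum.cong) auto
    also have "\<dots> = (\<Sum>t'\<in>scen_ints m. ?U x j t' k) + (if j = i \<and> k = k0 then c else 0)"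
      using t0 by (simp add: sum.delta c_def algebra_simps)
    finally show ?thesis .
  qed
  have inner: "(\<Sum>k<KK m. \<Sum>t'\<in>scen_ints m. ?U ?x' j t' k) = (\<Sum>k<KK m. \<Sum>t'\<in>scen_ints m. ?U x j t' k)
      + (if j = i then c else 0)" for j
    using k0 by (simp add: inner1 sum.distrib)
  have outer: "(\<Sum>j<NN m. ?B ?x' j + (\<Sum>k<KK m. \<Sum>t'\<in>scen_ints m. ?U ?x' j t' k))
     = (\<Sum>j<NN m. ?B x j + (\<Sum>k<KK m. \<Sum>t'\<in>scen_ints m. ?U x j t' k)) + c"
    using iN by (simp add: Bd inner sum.distrib)
  show ?thesis unfolding L_split outer ob c_def by simp
qed

lemma E_pert:
  assumes iN: "i < NN m" and t1: "tt m + 1 \<in> scen_ints m"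
  shows "lagrangian p m (x\<lparr>E := (E x)(i := E x i + s)\<rparr>) y
       = lagrangian p m x y + s * (phi y i + dhi y i - dlo y i - (\<Sum>k<KK m. phis y i (tt m + 1) k))"
proof -
  let ?x' = "x\<lparr>E := (E x)(i := E x i + s)\<rparr>"
  let ?U = "Uf p m y" and ?B = "Bf p m y"
  have pe: "prevE m ?x' j t' k = prevE m x j t' k + (if j = i \<and> t' = tt m + 1 then s else 0)" for j t' k
    by (auto simp: prevE_def)
  have pc: "prevC m ?x' = prevC m x" "prevD m ?x' = prevD m x"
    by (auto simp: prevC_def prevD_def fun_eq_iff)
  have ob: "objective p m ?x' = objective p m x" by (simp add: objective_def)
  have Ud: "?U ?x' j t' k = ?U x j t' k + (if j = i \<and> t' = tt m + 1 then - phis y i (tt m + 1) k * s else 0)" for j t' k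
    unfolding Uf_def pe pc by (auto simp: algebra_simps)
  have Bd: "?B ?x' j = ?B x j + (if j = i then s * (phi y i + dhi y i - dlo y i) else 0)" for j
    unfolding Bf_def by (auto simp: algebra_simps)
  have inner: "(\<Sum>k<KK m. \<Sum>t'\<in>scen_ints m. ?U ?x' j t' k) = (\<Sum>k<KK m. \<Sum>t'\<in>scen_ints m. ?U x j t' k)
      + (if j = i then - s * (\<Sum>k<KK m. phis y i (tt m + 1) k) else 0)" for j
  proof -
    have "(\<Sum>t'\<in>scen_ints m. ?U ?x' j t' k) = (\<Sum>t'\<in>scen_ints m. ?U x j t' k)
       + (if j = i then - phis y i (tt m + 1) k * s else 0)" for k
    proof -
      have "(\<Sum>t'\<in>scen_ints m. ?U ?x' j t' k) = (\<Sum>t'\<in>scen_ints m. ?U x j t' k)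
         + (\<Sum>t'\<in>scen_ints m. (if t' = tt m + 1 then (if j = i then - phis y i (tt m + 1) k * s else 0) else 0))"
        unfolding Ud sum.distrib[symmetric] by (rule sum.cong) auto
      also have "\<dots> = (\<Sum>t'\<in>scen_ints m. ?U x j t' k) + (if j = i then - phis y i (tt m + 1) k * s else 0)"
        using t1 by (simp add: sum.delta)
      finally show ?thesis .
    qed
    then show ?thesis by (simp add: sum.distrib sum_distrib_left sum_negf mult.commute)
  qed
  have outer: "(\<Sum>j<NN m. ?B ?x' j + (\<Sum>k<KK m. \<Sum>t'\<in>scen_ints m. ?U ?x' j t' k))
     = (\<Sum>j<NN m. ?B x j + (\<Sum>k<KK m. \<Sum>t'\<in>scen_ints m. ?U x j t' k))
      + (\<Sum>j<NN m. if j = i then s * (phi y i + dhi y i - dlo y i - (\<Sum>k<KK m. phis y i (tt m + 1) k)) else 0)"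
  proof -
    have "?B ?x' j + (\<Sum>k<KK m. \<Sum>t'\<in>scen_ints m. ?U ?x' j t' k) = ?B x j + (\<Sum>k<KK m. \<Sum>t'\<in>scen_ints m. ?U x j t' k)
      + (if j = i then s * (phi y i + dhi y i - dlo y i - (\<Sum>k<KK m. phis y i (tt m + 1) k)) else 0)" for j
      unfolding Bd inner by (simp add: algebra_simps)
    then show ?thesis by (simp add: sum.distrib)
  qed
  show ?thesis unfolding L_split outer ob using iN by simp
qed

lemma lin_stat:
  assumes "\<And>s::real. L \<le> L + s * c" shows "c = 0"
proof -
  have "L \<le> L + (- c) * c" by (rule assms)
  then have "c * c \<le> 0" by simp
  then show ?thesis by (simp add: mult_le_0_iff) (metis mult_le_0_iff not_square_less_zero
         le_less mult_le_0_iff linorder_not_le)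
qed

lemma sum_nonpos_zero:
  fixes f :: "'a \<Rightarrow> real"
  assumes "finite A" "\<And>a. a \<in> A \<Longrightarrow> f a \<le> 0" "sum f A = 0" "a \<in> A"
  shows "f a = 0"
proof -
  have "sum (\<lambda>a. - f a) A = 0" using assms(3) by (simp add: sum_negf)
  then have "\<forall>a\<in>A. - f a = 0" using assms by (subst sum_nonneg_eq_0_iff[symmetric]) auto
  then show ?thesis using assms(4) by simp
qed

theorem corollary1:
  fixes p :: esr_data and m :: mkt_data and x :: primal and y :: dual and i :: nat
  assumes wf: "wf_data p m"
    and W2: "2 \<le> WW m"
    and opt: "opt_primal_dual p m x y"
    and iN: "i < NN m"
    and ramp_t: "- rCdn p i < gC x i - gC0 m i" "gC x i - gC0 m i < rCup p i"
                "- rDdn p i < gD x i - gD0 m i" "gD x i - gD0 m i < rDup p i"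
    and ramp_t1: "\<forall>k<KK m.
                  - rCdn p i < gCs x i (tt m + 1) k - gC x i \<and> gCs x i (tt m + 1) k - gC x i < rCup p i
                \<and> - rDdn p i < gDs x i (tt m + 1) k - gD x i \<and> gDs x i (tt m + 1) k - gD x i < rDup p i"
    and soc_t: "Emin p i < E x i" "E x i < Emax p i"
    and soc_s: "\<forall>k<KK m. \<forall>t'\<in>scen_ints m. Emin p i < Es x i t' k \<and> Es x i t' k < Emax p i"
  shows "TLMP_C p m y i = LMP y \<and> TLMP_D p m y i = LMP y"
proof -
  let ?S = "scen_ints m"
  let ?U = "Uf p m y" and ?B = "Bf p m y"
  have feas: "feasible p m x" and dfe: "dual_feasible m y" and LO: "lagrangian p m x y = objective p m x"
    and Lmin: "\<And>x'. lagrangian p m x y \<le> lagrangian p m x' y"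
    using opt unfolding opt_primal_dual_def by blast+
  have t1: "tt m + 1 \<in> ?S" using W2 by (simp add: scen_ints_def)
  have Bnp: "?B x j \<le> 0" if j: "j < NN m" for j
  proof -
    have F: "E x j - E0 m j - (xiC p j * gC x j - gD x j / xiD p j) = 0"
      "Emin p j \<le> E x j" "E x j \<le> Emax p j"
      "- rCdn p j \<le> gC x j - gC0 m j" "gC x j - gC0 m j \<le> rCup p j"
      "- rDdn p j \<le> gD x j - gD0 m j" "gD x j - gD0 m j \<le> rDup p j"
      "gCmin p j \<le> gC x j" "gC x j \<le> gCmax p j"
      "gDmin p j \<le> gD x j" "gD x j \<le> gDmax p j"
      using feas j unfolding feasible_def by auto
    have D: "0 \<le> dlo y j" "0 \<le> dhi y j" "0 \<le> muClo y j" "0 \<le> muChi y j"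
        "0 \<le> muDlo y j" "0 \<le> muDhi y j" "0 \<le> rhoClo y j" "0 \<le> rhoChi y j"
        "0 \<le> rhoDlo y j" "0 \<le> rhoDhi y j"
      using dfe j unfolding dual_feasible_def by auto
    show ?thesis unfolding Bf_def F(1)
      by (simp only: mult_zero_right add_0_left, intro add_nonpos_nonpos mult_nonneg_nonpos)
         (use F D in auto)
  qed
  have Unp: "?U x j t' k \<le> 0" if j: "j < NN m" and k: "k < KK m" and t: "t' \<in> ?S" for j k t'
  proof -
    have F: "Es x j t' k - prevE m x j t' k - (xiC p j * gCs x j t' k - gDs x j t' k / xiD p j) = 0"
         "Emin p j \<le> Es x j t' k" "Es x j t' k \<le> Emax p j"
         "- rCdn p j \<le> gCs x j t' k - prevC m x j t' k" "gCs x j t' k - prevC m x j t' k \<le> rCup p j"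
         "- rDdn p j \<le> gDs x j t' k - prevD m x j t' k" "gDs x j t' k - prevD m x j t' k \<le> rDup p j"
         "gCmin p j \<le> gCs x j t' k" "gCs x j t' k \<le> gCmax p j"
         "gDmin p j \<le> gDs x j t' k" "gDs x j t' k \<le> gDmax p j"
      using feas j k t unfolding feasible_def by auto
    have D: "0 \<le> dlos y j t' k" "0 \<le> dhis y j t' k" "0 \<le> muClos y j t' k" "0 \<le> muChis y j t' k"
           "0 \<le> muDlos y j t' k" "0 \<le> muDhis y j t' k" "0 \<le> rhoClos y j t' k" "0 \<le> rhoChis y j t' k"
           "0 \<le> rhoDlos y j t' k" "0 \<le> rhoDhis y j t' k"
      using dfe j k t unfolding dual_feasible_def by auto
    show ?thesis unfolding Uf_def F(1)
      by (simp only: mult_zero_right add_0_left, intro add_nonpos_nonpos mult_nonneg_nonpos)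
         (use F D in auto)
  qed
  \<comment> \<open>complementary slackness\<close>
  have bal: "dem m - (\<Sum>i<NN m. gD x i - gC x i) = 0" using feas unfolding feasible_def by simp
  have bals: "(\<Sum>k<KK m. \<Sum>t'\<in>?S. lams y t' k * (dhat m t' k - (\<Sum>i<NN m. gDs x i t' k - gCs x i t' k))) = 0"
    using feas unfolding feasible_def by (intro sum.neutral ballI) auto
  have tot: "(\<Sum>j<NN m. ?B x j + (\<Sum>k<KK m. \<Sum>t'\<in>?S. ?U x j t' k)) = 0"
    using LO unfolding L_split bal bals by simp
  have Unps: "(\<Sum>k<KK m. \<Sum>t'\<in>?S. ?U x j t' k) \<le> 0" if "j < NN m" for j
    using Unp that by (intro sum_nonpos) auto
  have blk: "?B x i + (\<Sum>k<KK m. \<Sum>t'\<in>?S. ?U x i t' k) = 0"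
    by (rule sum_nonpos_zero[OF _ _ tot]) (use iN Bnp Unps in \<open>auto intro: add_nonpos_nonpos\<close>)
  have B0: "?B x i = 0" and Us0: "(\<Sum>k<KK m. \<Sum>t'\<in>?S. ?U x i t' k) = 0"
    using blk Bnp[OF iN] Unps[OF iN] by linarith+
  have U0: "?U x i t' k = 0" if k: "k < KK m" and t: "t' \<in> ?S" for k t'
  proof -
    have "(\<Sum>t'\<in>?S. ?U x i t' k) = 0"
      by (rule sum_nonpos_zero[OF _ _ Us0]) (use k Unp iN in \<open>auto intro: sum_nonpos\<close>)
    moreover have "\<And>t''. t'' \<in> ?S \<Longrightarrow> ?U x i t'' k \<le> 0" using Unp iN k by blast
    ultimately show ?thesis using sum_nonpos_zero[where f="\<lambda>t'. ?U x i t' k" and A="?S", OF fin_scen] t by blast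
  qed
  have Fi: "E x i - E0 m i - (xiC p i * gC x i - gD x i / xiD p i) = 0"
      "Emin p i \<le> E x i" "E x i \<le> Emax p i"
      "- rCdn p i \<le> gC x i - gC0 m i" "gC x i - gC0 m i \<le> rCup p i"
      "- rDdn p i \<le> gD x i - gD0 m i" "gD x i - gD0 m i \<le> rDup p i"
      "gCmin p i \<le> gC x i" "gC x i \<le> gCmax p i"
      "gDmin p i \<le> gD x i" "gD x i \<le> gDmax p i"
    using feas iN unfolding feasible_def by auto
  have Di: "0 \<le> dlo y i" "0 \<le> dhi y i" "0 \<le> muClo y i" "0 \<le> muChi y i"
      "0 \<le> muDlo y i" "0 \<le> muDhi y i" "0 \<le> rhoClo y i" "0 \<le> rhoChi y i"
      "0 \<le> rhoDlo y i" "0 \<le> rhoDhi y i"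
    using dfe iN unfolding dual_feasible_def by auto
  have np: "dhi y i * (E x i - Emax p i) \<le> 0" "dlo y i * (Emin p i - E x i) \<le> 0"
     "muChi y i * ((gC x i - gC0 m i) - rCup p i) \<le> 0" "muClo y i * (- rCdn p i - (gC x i - gC0 m i)) \<le> 0"
     "muDhi y i * ((gD x i - gD0 m i) - rDup p i) \<le> 0" "muDlo y i * (- rDdn p i - (gD x i - gD0 m i)) \<le> 0"
     "rhoChi y i * (gC x i - gCmax p i) \<le> 0" "rhoClo y i * (gCmin p i - gC x i) \<le> 0"
     "rhoDhi y i * (gD x i - gDmax p i) \<le> 0" "rhoDlo y i * (gDmin p i - gD x i) \<le> 0"
    using Fi Di by (auto intro!: mult_nonneg_nonpos)
  have B0': "dhi y i * (E x i - Emax p i) + dlo y i * (Emin p i - E x i)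
      + muChi y i * ((gC x i - gC0 m i) - rCup p i) + muClo y i * (- rCdn p i - (gC x i - gC0 m i))
      + muDhi y i * ((gD x i - gD0 m i) - rDup p i) + muDlo y i * (- rDdn p i - (gD x i - gD0 m i))
      + rhoChi y i * (gC x i - gCmax p i) + rhoClo y i * (gCmin p i - gC x i)
      + rhoDhi y i * (gD x i - gDmax p i) + rhoDlo y i * (gDmin p i - gD x i) = 0"
    using B0 unfolding Bf_def Fi(1) by simp
  have z: "dhi y i * (E x i - Emax p i) = 0" "dlo y i * (Emin p i - E x i) = 0"
     "muChi y i * ((gC x i - gC0 m i) - rCup p i) = 0" "muClo y i * (- rCdn p i - (gC x i - gC0 m i)) = 0"
     "muDhi y i * ((gD x i - gD0 m i) - rDup p i) = 0" "muDlo y i * (- rDdn p i - (gD x i - gD0 m i)) = 0"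
    using B0' np by linarith+
  have dhi0: "dhi y i = 0" "dlo y i = 0" "muChi y i = 0" "muClo y i = 0" "muDhi y i = 0" "muDlo y i = 0"
    using z ramp_t soc_t by auto
  have zs: "dhis y i t' k = 0 \<and> dlos y i t' k = 0 \<and>
      (t' = tt m + 1 \<longrightarrow> muChis y i t' k = 0 \<and> muClos y i t' k = 0 \<and> muDhis y i t' k = 0 \<and> muDlos y i t' k = 0)"
    if k: "k < KK m" and t: "t' \<in> ?S" for k t'
  proof -
    have F: "Es x i t' k - prevE m x i t' k - (xiC p i * gCs x i t' k - gDs x i t' k / xiD p i) = 0"
         "Emin p i \<le> Es x i t' k" "Es x i t' k \<le> Emax p i"
         "- rCdn p i \<le> gCs x i t' k - prevC m x i t' k" "gCs x i t' k - prevC m x i t' k \<le> rCup p i"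
         "- rDdn p i \<le> gDs x i t' k - prevD m x i t' k" "gDs x i t' k - prevD m x i t' k \<le> rDup p i"
         "gCmin p i \<le> gCs x i t' k" "gCs x i t' k \<le> gCmax p i"
         "gDmin p i \<le> gDs x i t' k" "gDs x i t' k \<le> gDmax p i"
      using feas iN k t unfolding feasible_def by auto
    have D: "0 \<le> dlos y i t' k" "0 \<le> dhis y i t' k" "0 \<le> muClos y i t' k" "0 \<le> muChis y i t' k"
           "0 \<le> muDlos y i t' k" "0 \<le> muDhis y i t' k" "0 \<le> rhoClos y i t' k" "0 \<le> rhoChis y i t' k"
           "0 \<le> rhoDlos y i t' k" "0 \<le> rhoDhis y i t' k"
      using dfe iN k t unfolding dual_feasible_def by auto
    have np: "dhis y i t' k * (Es x i t' k - Emax p i) \<le> 0" "dlos y i t' k * (Emin p i - Es x i t' k) \<le> 0"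
        "muChis y i t' k * ((gCs x i t' k - prevC m x i t' k) - rCup p i) \<le> 0"
        "muClos y i t' k * (- rCdn p i - (gCs x i t' k - prevC m x i t' k)) \<le> 0"
        "muDhis y i t' k * ((gDs x i t' k - prevD m x i t' k) - rDup p i) \<le> 0"
        "muDlos y i t' k * (- rDdn p i - (gDs x i t' k - prevD m x i t' k)) \<le> 0"
        "rhoChis y i t' k * (gCs x i t' k - gCmax p i) \<le> 0" "rhoClos y i t' k * (gCmin p i - gCs x i t' k) \<le> 0"
        "rhoDhis y i t' k * (gDs x i t' k - gDmax p i) \<le> 0" "rhoDlos y i t' k * (gDmin p i - gDs x i t' k) \<le> 0"
      using F D by (auto intro!: mult_nonneg_nonpos)
    have U0': "dhis y i t' k * (Es x i t' k - Emax p i) + dlos y i t' k * (Emin p i - Es x i t' k)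
        + muChis y i t' k * ((gCs x i t' k - prevC m x i t' k) - rCup p i)
        + muClos y i t' k * (- rCdn p i - (gCs x i t' k - prevC m x i t' k))
        + muDhis y i t' k * ((gDs x i t' k - prevD m x i t' k) - rDup p i)
        + muDlos y i t' k * (- rDdn p i - (gDs x i t' k - prevD m x i t' k))
        + rhoChis y i t' k * (gCs x i t' k - gCmax p i) + rhoClos y i t' k * (gCmin p i - gCs x i t' k)
        + rhoDhis y i t' k * (gDs x i t' k - gDmax p i) + rhoDlos y i t' k * (gDmin p i - gDs x i t' k) = 0"
      using U0[OF k t] unfolding Uf_def F(1) by simp
    have z: "dhis y i t' k * (Es x i t' k - Emax p i) = 0" "dlos y i t' k * (Emin p i - Es x i t' k) = 0"
        "muChis y i t' k * ((gCs x i t' k - prevC m x i t' k) - rCup p i) = 0"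
        "muClos y i t' k * (- rCdn p i - (gCs x i t' k - prevC m x i t' k)) = 0"
        "muDhis y i t' k * ((gDs x i t' k - prevD m x i t' k) - rDup p i) = 0"
        "muDlos y i t' k * (- rDdn p i - (gDs x i t' k - prevD m x i t' k)) = 0"
      using U0' np by linarith+
    have ss: "Emin p i < Es x i t' k" "Es x i t' k < Emax p i" using soc_s k t by blast+
    have s1: "dhis y i t' k = 0" "dlos y i t' k = 0" using z(1,2) ss by simp_all
    have s2: "muChis y i t' k = 0 \<and> muClos y i t' k = 0 \<and> muDhis y i t' k = 0 \<and> muDlos y i t' k = 0"
      if "t' = tt m + 1"
      using z(3-6) ramp_t1 k that by (auto simp: prevC_def prevD_def)
    show ?thesis using s1 s2 by blast
  qed
  \<comment> \<open>stationarity in SOC variables\<close>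
  have cE: "phi y i + dhi y i - dlo y i - (\<Sum>k<KK m. phis y i (tt m + 1) k) = 0"
  proof (rule lin_stat[of "lagrangian p m x y"])
    fix s
    show "lagrangian p m x y \<le> lagrangian p m x y + s * (phi y i + dhi y i - dlo y i - (\<Sum>k<KK m. phis y i (tt m + 1) k))"
      using Lmin[of "x\<lparr>E := (E x)(i := E x i + s)\<rparr>"] E_pert[OF iN t1, of p x s y] by simp
  qed
  have cEs: "phis y i t0 k0 + dhis y i t0 k0 - dlos y i t0 k0
            - (if t0 + 1 \<in> ?S then phis y i (t0 + 1) k0 else 0) = 0"
    if t0: "t0 \<in> ?S" and k0: "k0 < KK m" for t0 k0
  proof (rule lin_stat[of "lagrangian p m x y"])
    fix s
    show "lagrangian p m x y \<le> lagrangian p m x y + s * (phis y i t0 k0 + dhis y i t0 k0 - dlos y i t0 k0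
            - (if t0 + 1 \<in> ?S then phis y i (t0 + 1) k0 else 0))"
      using Lmin[of "x\<lparr>Es := (\<lambda>j t k. Es x j t k + (if j = i \<and> t = t0 \<and> k = k0 then s else 0))\<rparr>"]
        Es_pert[OF iN t0 k0, of p x s y] by simp
  qed
  have phis0: "\<forall>t\<in>?S. tt m + WW m - t \<le> d \<longrightarrow> phis y i t k = 0" if k: "k < KK m" for d k
  proof (induction d)
    case 0
    then show ?case by (auto simp: scen_ints_def)
  next
    case (Suc d)
    show ?case
    proof (intro ballI impI)
      fix t assume t: "t \<in> ?S" and le: "tt m + WW m - t \<le> Suc d"
      show "phis y i t k = 0"
      proof (cases "t + 1 \<in> ?S")
        case True
        then have "tt m + WW m - (t + 1) \<le> d" using le by simp
        then have "phis y i (t + 1) k = 0" using Suc.IH True by blast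
        then show ?thesis using cEs[OF t k] zs[OF k t] True by simp
      next
        case False
        then show ?thesis using cEs[OF t k] zs[OF k t] by simp
      qed
    qed
  qed
  have "phis y i (tt m + 1) k = 0" if "k < KK m" for k
    using phis0[OF that, of "WW m"] t1 by simp
  then have phi0: "phi y i = 0" using cE dhi0 by simp
  have DC: "DeltaC m y i = 0" and DD: "DeltaD m y i = 0"
    unfolding DeltaC_def DeltaD_def using dhi0 zs t1 by simp_all
  show ?thesis unfolding TLMP_C_def TLMP_D_def LMP_def DC DD phi0 by simp
qed

end
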